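(* Let $G$ be a finite simple unmixed graph without isolated vertices and let $I_c(G)$ be its ideal of covers. If the graph $\mathcal{G}_{I_c(G)}$ is connected, then (a) $G$ has no duplicated vertices, and (b) every $4$-cycle of $G$ has an edge that does not satisfy the (P) property.
   Context: $G$ is unmixed if all minimal vertex covers (inclusion-minimal vertex sets meeting every edge) have equal size. $I_c(G)$ is generated by $\prod_{t\in C}t$ over minimal vertex covers $C$. With minimal vertex covers $C_1,\dots,C_r$, $\mathcal{G}_{I_c(G)}$ has vertex set $\{C_1,\ldots,C_r\}$ and $\{C_i,C_j\}$ ($i\ne j$) is an edge iff $|C_i\cup C_j|=|C_i|+1$. Two distinct vertices $t,t'$ are duplicated if $N_G(t)=N_G(t')$. An edge $e=\{t_1,t_2\}$ has the (P) property if for all edges $\{t_1,t_1'\}$ and $\{t_2,t_2'\}$ distinct from $e$, $\{t_1',t_2'\}$ is an edge of $G$. *)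

theory Defs
  imports Main
begin

definition simple_graph :: "'a set \<Rightarrow> 'a set set \<Rightarrow> bool" where
  "simple_graph V E \<longleftrightarrow> finite V \<and> (\<forall>e\<in>E. e \<subseteq> V \<and> card e = 2)"

definition no_isolated_vertices :: "'a set \<Rightarrow> 'a set set \<Rightarrow> bool" where
  "no_isolated_vertices V E \<longleftrightarrow> (\<forall>v\<in>V. \<exists>e\<in>E. v \<in> e)"

definition vertex_cover :: "'a set \<Rightarrow> 'a set set \<Rightarrow> 'a set \<Rightarrow> bool" where
  "vertex_cover V E C \<longleftrightarrow> C \<subseteq> V \<and> (\<forall>e\<in>E. e \<inter> C \<noteq> {})"

definition minimal_vertex_cover :: "'a set \<Rightarrow> 'a set set \<Rightarrow> 'a set \<Rightarrow> bool" where
  "minimal_vertex_cover V E C \<longleftrightarrow>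
     vertex_cover V E C \<and> (\<forall>D. D \<subset> C \<longrightarrow> \<not> vertex_cover V E D)"

definition unmixed :: "'a set \<Rightarrow> 'a set set \<Rightarrow> bool" where
  "unmixed V E \<longleftrightarrow> (\<forall>C D. minimal_vertex_cover V E C \<and> minimal_vertex_cover V E D
                        \<longrightarrow> card C = card D)"

text \<open>Edge relation of the graph G_{I_c(G)}: its vertices are the minimal vertex covers
  (equivalently, the squarefree monomial generators of the ideal of covers I_c(G)),
  and C_i, C_j (i \<noteq> j) are adjacent iff |C_i \<union> C_j| = |C_i| + 1.\<close>
definition cover_graph_adj :: "'a set \<Rightarrow> 'a set set \<Rightarrow> 'a set \<Rightarrow> 'a set \<Rightarrow> bool" where
  "cover_graph_adj V E C D \<longleftrightarrow>
     minimal_vertex_cover V E C \<and> minimal_vertex_cover V E D \<and> C \<noteq> D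
     \<and> card (C \<union> D) = card C + 1"

definition cover_graph_connected :: "'a set \<Rightarrow> 'a set set \<Rightarrow> bool" where
  "cover_graph_connected V E \<longleftrightarrow>
     (\<forall>C D. minimal_vertex_cover V E C \<and> minimal_vertex_cover V E D
        \<longrightarrow> (cover_graph_adj V E)\<^sup>*\<^sup>* C D)"

definition nbhd :: "'a set set \<Rightarrow> 'a \<Rightarrow> 'a set" where
  "nbhd E t = {u. {t, u} \<in> E}"

definition duplicated :: "'a set \<Rightarrow> 'a set set \<Rightarrow> 'a \<Rightarrow> 'a \<Rightarrow> bool" where
  "duplicated V E t t' \<longleftrightarrow> t \<in> V \<and> t' \<in> V \<and> t \<noteq> t' \<and> nbhd E t = nbhd E t'"

definition P_property :: "'a set set \<Rightarrow> 'a \<Rightarrow> 'a \<Rightarrow> bool" where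
  "P_property E t1 t2 \<longleftrightarrow>
     (\<forall>t1' t2'. {t1, t1'} \<in> E \<and> {t2, t2'} \<in> E \<and> {t1, t1'} \<noteq> {t1, t2} \<and> {t2, t2'} \<noteq> {t1, t2}
        \<longrightarrow> {t1', t2'} \<in> E)"

definition four_cycle :: "'a set set \<Rightarrow> 'a \<Rightarrow> 'a \<Rightarrow> 'a \<Rightarrow> 'a \<Rightarrow> bool" where
  "four_cycle E a b c d \<longleftrightarrow> distinct [a, b, c, d]
     \<and> {a, b} \<in> E \<and> {b, c} \<in> E \<and> {c, d} \<in> E \<and> {d, a} \<in> E"

end

theory Submission
  imports Defs
begin

lemma path_step:
  assumes "R\<^sup>*\<^sup>* x y" "P x" "\<not> P y"
  shows "\<exists>u v. R u v \<and> P u \<and> \<not> P v"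
  using assms by (induction rule: rtranclp_induct) auto

lemma exists_min_cover:
  assumes "finite X" "vertex_cover V E X"
  shows "\<exists>D\<subseteq>X. minimal_vertex_cover V E D"
  using assms
proof (induction "card X" arbitrary: X rule: less_induct)
  case less
  show ?case
  proof (cases "minimal_vertex_cover V E X")
    case True then show ?thesis by blast
  next
    case False
    then obtain D where D: "D \<subset> X" "vertex_cover V E D"
      using less.prems unfolding minimal_vertex_cover_def by blast
    have "card D < card X" using D less.prems by (simp add: psubset_card_mono)
    moreover have "finite D" using D less.prems finite_subset by blast
    ultimately obtain D' where "D' \<subseteq> D" "minimal_vertex_cover V E D'"
      using less.hyps D by blast
    then show ?thesis using D by blast
  qed
qed

lemma private_nb:
  assumes sg: "simple_graph V E" and m: "minimal_vertex_cover V E C" and t: "t \<in> C"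
  shows "\<exists>u. {t,u} \<in> E \<and> u \<notin> C \<and> u \<noteq> t"
proof -
  have "\<not> vertex_cover V E (C - {t})" using m t unfolding minimal_vertex_cover_def by blast
  moreover have "C - {t} \<subseteq> V" using m unfolding minimal_vertex_cover_def vertex_cover_def by blast
  ultimately obtain e where e: "e \<in> E" "e \<inter> (C - {t}) = {}" unfolding vertex_cover_def by blast
  have "e \<inter> C \<noteq> {}" using m e unfolding minimal_vertex_cover_def vertex_cover_def by blast
  hence "t \<in> e" using e by blast
  from sg e have "card e = 2" unfolding simple_graph_def by blast
  then obtain x y where xy: "e = {x,y}" "x \<noteq> y" by (meson card_2_iff)
  show ?thesis
  proof (cases "x = t")
    case True
    then show ?thesis using xy e by (rule_tac x=y in exI) auto
  next
    case False
    then have "y = t" using \<open>t \<in> e\<close> xy by blast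
    then show ?thesis using xy e False by (rule_tac x=x in exI) (auto simp: insert_commute)
  qed
qed

lemma edge_ne:
  assumes "simple_graph V E" "{a,b} \<in> E" shows "a \<noteq> b" "a \<in> V" "b \<in> V"
  using assms unfolding simple_graph_def by (auto dest!: bspec[where x="{a,b}"])

lemma key:
  assumes sg: "simple_graph V E" and um: "unmixed V E" and cc: "cover_graph_connected V E"
    and tt: "t \<noteq> t'"
    and iff: "\<And>C. minimal_vertex_cover V E C \<Longrightarrow> (t \<in> C \<longleftrightarrow> t' \<in> C)"
    and C1: "minimal_vertex_cover V E C1" "t \<in> C1"
    and C2: "minimal_vertex_cover V E C2" "t \<notin> C2"
  shows False
proof -
  have "(cover_graph_adj V E)\<^sup>*\<^sup>* C1 C2" using cc C1 C2 unfolding cover_graph_connected_def by blast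
  then obtain X Y where XY: "cover_graph_adj V E X Y" "t \<in> X" "t \<notin> Y"
    using path_step[of "cover_graph_adj V E" C1 C2 "\<lambda>X. t \<in> X"] C1 C2 by blast
  have mX: "minimal_vertex_cover V E X" and mY: "minimal_vertex_cover V E Y"
    and cu: "card (X \<union> Y) = card X + 1"
    using XY unfolding cover_graph_adj_def by auto
  have fin: "finite X" "finite Y" using mX mY sg unfolding simple_graph_def minimal_vertex_cover_def vertex_cover_def
    by (auto intro: finite_subset)
  have ceq: "card X = card Y" using um mX mY unfolding unmixed_def by blast
  have "card (X \<union> Y) = card Y + card (X - Y)"
    by (metis Un_Diff_cancel2 Un_commute card_Un_disjoint Diff_disjoint fin finite_Diff inf_commute)
  hence c1: "card (X - Y) = 1" using cu ceq by simp
  have "t' \<in> X" "t' \<notin> Y" using iff mX mY XY by auto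
  hence "{t,t'} \<subseteq> X - Y" using XY by auto
  hence "card {t,t'} \<le> card (X - Y)" using fin by (meson card_mono finite_Diff)
  thus False using c1 tt by simp
qed

lemma some_in:
  assumes "minimal_vertex_cover V E C" "{a,b} \<in> E" shows "a \<in> C \<or> b \<in> C"
proof -
  have "vertex_cover V E C" using assms(1) unfolding minimal_vertex_cover_def by (rule conjunct1)
  then have "{a,b} \<inter> C \<noteq> {}" using assms(2) unfolding vertex_cover_def by (rule_tac bspec) (erule conjunct2)
  then show ?thesis by blast
qed

lemma covers_exist:
  assumes sg: "simple_graph V E" and e: "{t,u} \<in> E"
  shows "\<exists>C. minimal_vertex_cover V E C \<and> t \<in> C" "\<exists>C. minimal_vertex_cover V E C \<and> t \<notin> C"
proof -
  have fV: "finite V" using sg unfolding simple_graph_def by blast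
  have ne: "t \<noteq> u" using edge_ne[OF sg e] by simp
  have "\<forall>f\<in>E. f \<inter> (V - {u}) \<noteq> {}"
  proof
    fix f assume f: "f \<in> E"
    then have "card f = 2" "f \<subseteq> V" using sg unfolding simple_graph_def by auto
    then obtain x y where "f = {x,y}" "x \<noteq> y" "f \<subseteq> V" by (meson card_2_iff)
    then show "f \<inter> (V - {u}) \<noteq> {}" by auto
  qed
  then have "vertex_cover V E (V - {u})" unfolding vertex_cover_def by blast
  then obtain D where D: "D \<subseteq> V - {u}" "minimal_vertex_cover V E D" using exists_min_cover[of "V - {u}" V E] fV by auto
  then have "{t,u} \<inter> D \<noteq> {}" using some_in[OF D(2) e] by blast
  then show "\<exists>C. minimal_vertex_cover V E C \<and> t \<in> C" using D by blast
  have "\<forall>f\<in>E. f \<inter> (V - {t}) \<noteq> {}"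
  proof
    fix f assume f: "f \<in> E"
    then have "card f = 2" "f \<subseteq> V" using sg unfolding simple_graph_def by auto
    then obtain x y where "f = {x,y}" "x \<noteq> y" "f \<subseteq> V" by (meson card_2_iff)
    then show "f \<inter> (V - {t}) \<noteq> {}" by auto
  qed
  then have "vertex_cover V E (V - {t})" unfolding vertex_cover_def by blast
  then obtain D where D: "D \<subseteq> V - {t}" "minimal_vertex_cover V E D" using exists_min_cover[of "V - {t}" V E] fV by auto
  then show "\<exists>C. minimal_vertex_cover V E C \<and> t \<notin> C" by blast
qed

lemma P_not_both:
  assumes sg: "simple_graph V E" and P: "P_property E a b" and e: "{a,b} \<in> E"
    and m: "minimal_vertex_cover V E C"
  shows "\<not> (a \<in> C \<and> b \<in> C)"
proof
  assume ab: "a \<in> C \<and> b \<in> C"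
  obtain a' where a': "{a,a'} \<in> E" "a' \<notin> C" using private_nb[OF sg m] ab by blast
  obtain b' where b': "{b,b'} \<in> E" "b' \<notin> C" using private_nb[OF sg m] ab by blast
  have "{a,a'} \<noteq> {a,b}" using a' ab by (metis doubleton_eq_iff)
  moreover have "{b,b'} \<noteq> {a,b}" using b' ab by (metis doubleton_eq_iff)
  ultimately have "{a',b'} \<in> E" using P a' b' unfolding P_property_def by blast
  then show False using some_in[OF m, of a' b'] a' b' by blast
qed

theorem theorem5p4:
  fixes V :: "'a set" and E :: "'a set set"
  assumes "simple_graph V E"
    and "unmixed V E"
    and "no_isolated_vertices V E"
    and "cover_graph_connected V E"
  shows "(\<forall>t t'. \<not> duplicated V E t t')
    \<and> (\<forall>a b c d. four_cycle E a b c d \<longrightarrow>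
          \<not> P_property E a b \<or> \<not> P_property E b c \<or> \<not> P_property E c d \<or> \<not> P_property E d a)"
proof (intro conjI allI impI)
  note sg = assms(1) and um = assms(2) and cc = assms(4)
  fix t t'
  show "\<not> duplicated V E t t'"
  proof
    assume dup: "duplicated V E t t'"
    hence tV: "t \<in> V" and ne: "t \<noteq> t'" and nb: "nbhd E t = nbhd E t'"
      unfolding duplicated_def by auto
    obtain e where e: "e \<in> E" "t \<in> e" using assms(3) tV unfolding no_isolated_vertices_def by blast
    obtain x y where xy: "e = {x,y}" "x \<noteq> y" using sg e unfolding simple_graph_def by (meson card_2_iff)
    have "\<exists>u. {t,u} \<in> E"
    proof (cases "x = t")
      case True then show ?thesis using xy e by blast
    next
      case False then have "y = t" using xy e by blast
      then have "{t,x} \<in> E" using xy e by (simp add: insert_commute)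
      then show ?thesis by blast
    qed
    then obtain u where u: "{t,u} \<in> E" by blast
    have nbiff: "{t,v} \<in> E \<longleftrightarrow> {t',v} \<in> E" for v
      using nb unfolding nbhd_def by (metis mem_Collect_eq)
    have iff: "t \<in> C \<longleftrightarrow> t' \<in> C" if m: "minimal_vertex_cover V E C" for C
    proof
      assume "t \<in> C"
      then obtain v where "{t,v} \<in> E" "v \<notin> C" using private_nb[OF sg m] by blast
      then show "t' \<in> C" using some_in[OF m, of t' v] nbiff by blast
    next
      assume "t' \<in> C"
      then obtain v where "{t',v} \<in> E" "v \<notin> C" using private_nb[OF sg m] by blast
      then show "t \<in> C" using some_in[OF m, of t v] nbiff by blast
    qed
    show False using key[OF sg um cc ne iff] covers_exist[OF sg u] by blast
  qed
next
  note sg = assms(1) and um = assms(2) and cc = assms(4)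
  fix a b c d
  assume fc: "four_cycle E a b c d"
  show "\<not> P_property E a b \<or> \<not> P_property E b c \<or> \<not> P_property E c d \<or> \<not> P_property E d a"
  proof (rule ccontr)
    assume "\<not> ?thesis"
    hence Pab: "P_property E a b" and Pbc: "P_property E b c" by auto
    have eab: "{a,b} \<in> E" and ebc: "{b,c} \<in> E" and ne: "a \<noteq> c" using fc unfolding four_cycle_def by auto
    have iff: "a \<in> C \<longleftrightarrow> c \<in> C" if m: "minimal_vertex_cover V E C" for C
      using P_not_both[OF sg Pab eab m] P_not_both[OF sg Pbc ebc m] some_in[OF m eab] some_in[OF m ebc]
      by blast
    show False using key[OF sg um cc ne iff] covers_exist[OF sg eab] by blast
  qed
qed

end
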